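(* Let $X=(X_1,X_2)$ be a nonnegative bivariate random vector with absolutely continuous joint distribution function $F$, support contained in $(0,b_1)\times(0,b_2)$, and marginal densities $f_{X_1},f_{X_2}$. Assume all quantities below are finite. Then $$\overline\varepsilon(X_1,X_2)\ \geq\ \max\left[C_1e^{H(X_1)},\,C_2e^{H(X_2)}\right],$$ where $$C_1=\exp\left[E_{X_1}\left(\log\int_0^{b_2}F(X_1,x_2)\,|\log F(X_1,x_2)|\,dx_2\right)\right],\qquad C_2=\exp\left[E_{X_2}\left(\log\int_0^{b_1}F(x_1,X_2)\,|\log F(x_1,X_2)|\,dx_1\right)\right].$$
   Context: The bivariate cumulative past entropy is $\overline\varepsilon(X_1,X_2)=-\int_0^{b_1}\int_0^{b_2}F(x_1,x_2)\log F(x_1,x_2)\,dx_2\,dx_1$, where $F(x_1,x_2)=P(X_1\le x_1,X_2\le x_2)$ and $0\log0=0$. $H(X_i)=-\int f_{X_i}(x)\log f_{X_i}(x)\,dx$ is the Shannon differential entropy of the marginal $X_i$. $E_{X_i}$ denotes expectation with respect to the distribution of $X_i$. *)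

theory Defs
  imports "HOL-Probability.Probability"
begin

definition jointCDF :: "'a measure \<Rightarrow> ('a \<Rightarrow> real) \<Rightarrow> ('a \<Rightarrow> real) \<Rightarrow> real \<Rightarrow> real \<Rightarrow> real" where
  "jointCDF M X1 X2 x1 x2 = measure M {\<omega> \<in> space M. X1 \<omega> \<le> x1 \<and> X2 \<omega> \<le> x2}"

text \<open>Bivariate cumulative past entropy (natural log; ln 0 = 0 in Isabelle, so 0 log 0 = 0).\<close>
definition bcpe :: "'a measure \<Rightarrow> ('a \<Rightarrow> real) \<Rightarrow> ('a \<Rightarrow> real) \<Rightarrow> real \<Rightarrow> real \<Rightarrow> real" where
  "bcpe M X1 X2 b1 b2 =
     - (\<integral>x1\<in>{0..b1}. (\<integral>x2\<in>{0..b2}. jointCDF M X1 X2 x1 x2 * ln (jointCDF M X1 X2 x1 x2) \<partial>lborel) \<partial>lborel)"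

definition diff_entropy :: "(real \<Rightarrow> real) \<Rightarrow> real" where
  "diff_entropy f = - (\<integral>x. f x * ln (f x) \<partial>lborel)"

end

theory Submission
  imports Defs
begin


lemma jensen_aux:
  fixes M :: "'a measure" and X :: "'a \<Rightarrow> real" and f g :: "real \<Rightarrow> real" and b :: real
  assumes P: "prob_space M"
    and fnn: "\<And>x. f x \<ge> 0"
    and D: "distributed M lborel X (\<lambda>x. ennreal (f x))"
    and gm[measurable]: "g \<in> borel_measurable lborel"
    and gnn: "\<And>x. g x \<ge> 0"
    and gi: "set_integrable lborel {0..b} g"
    and supp: "AE \<omega> in M. 0 < X \<omega> \<and> X \<omega> < b \<and> 0 < g (X \<omega>)"
    and fH: "integrable lborel (\<lambda>x. f x * ln (f x))"
    and fC: "integrable M (\<lambda>\<omega>. ln (g (X \<omega>)))"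
  shows "exp (\<integral>\<omega>. ln (g (X \<omega>)) \<partial>M) * exp (diff_entropy f) \<le> (\<integral>x\<in>{0..b}. g x \<partial>lborel)"
proof -
  interpret prob_space M by fact
  have fm[measurable]: "f \<in> borel_measurable lborel"
    using distributed_real_measurable[OF _ D] fnn by auto
  have Xm[measurable]: "X \<in> measurable M lborel" using D by (simp add: distributed_def)
  define A where "A = (\<integral>x\<in>{0..b}. g x \<partial>lborel)"
  define G where "G x = indicator {0..b} x * g x" for x
  have Gi: "integrable lborel G" using gi unfolding G_def set_integrable_def by simp
  have AG: "A = integral\<^sup>L lborel G" unfolding A_def G_def set_lebesgue_integral_def by simp
  have E1: "(\<integral>\<omega>. ln (g (X \<omega>)) \<partial>M) = (\<integral>x. f x * ln (g x) \<partial>lborel)"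
    using distributed_integral[OF D, of "\<lambda>x. ln (g x)"] fnn by simp
  have I1: "integrable lborel (\<lambda>x. f x * ln (g x))"
    using distributed_integrable[OF D, of "\<lambda>x. ln (g x)"] fnn fC by simp
  have If: "integrable lborel f"
    using distributed_integrable[OF D, of "\<lambda>x. 1"] fnn by simp
  have intf: "(\<integral>x. f x \<partial>lborel) = 1"
    using distributed_integral[OF D, of "\<lambda>x. 1"] fnn by (simp add: prob_space)
  have AEl: "AE x in lborel. 0 < f x \<longrightarrow> (0 < x \<and> x < b \<and> 0 < g x)"
  proof -
    have "AE x in distr M lborel X. 0 < x \<and> x < b \<and> 0 < g x"
      using supp Xm by (subst AE_distr_iff) (auto simp del: AE_conj_iff)
    then have "AE x in density lborel (\<lambda>x. ennreal (f x)). 0 < x \<and> x < b \<and> 0 < g x"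
      using distributed_distr_eq_density[OF D] by metis
    then show ?thesis by (subst (asm) AE_density) auto
  qed
  have A0: "A > 0"
  proof -
    have "A \<ge> 0" unfolding AG G_def using gnn by (intro integral_nonneg_AE) (auto simp: indicator_def)
    moreover have "A \<noteq> 0"
    proof
      assume "A = 0"
      then have "AE x in lborel. G x = 0"
        using integral_nonneg_eq_0_iff_AE[OF Gi] gnn unfolding AG G_def by (auto simp: indicator_def)
      with AEl have "AE x in lborel. f x = 0"
        by eventually_elim (use fnn in \<open>auto simp: G_def indicator_def less_le\<close>)
      then have "(\<integral>x. f x \<partial>lborel) = 0" by (simp add: integral_eq_zero_AE)
      with intf show False by simp
    qed
    ultimately show ?thesis by simp
  qed
  have pw: "AE x in lborel. f x * ln (g x) - f x * ln (f x) \<le> f x * ln A + G x / A - f x"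
    using AEl
  proof eventually_elim
    case (elim x)
    show ?case
    proof (cases "f x = 0")
      case True then show ?thesis using gnn A0 by (simp add: G_def indicator_def)
    next
      case False
      then have fp: "f x > 0" using fnn[of x] by linarith
      with elim have gp: "g x > 0" and xb: "x \<in> {0..b}" by auto
      have "ln (g x / (A * f x)) \<le> g x / (A * f x) - 1"
        using gp fp A0 by (intro ln_le_minus_one) auto
      moreover have "ln (g x / (A * f x)) = ln (g x) - ln A - ln (f x)"
        using gp fp A0 by (simp add: ln_div ln_mult)
      ultimately have "ln (g x) - ln (f x) \<le> ln A + g x / (A * f x) - 1" by simp
      then have "f x * (ln (g x) - ln (f x)) \<le> f x * (ln A + g x / (A * f x) - 1)"
        using fp by (intro mult_left_mono) auto
      then show ?thesis using fp A0 xb by (simp add: G_def algebra_simps)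
    qed
  qed
  have "(\<integral>x. f x * ln (g x) - f x * ln (f x) \<partial>lborel) \<le> (\<integral>x. f x * ln A + G x / A - f x \<partial>lborel)"
    using I1 fH If Gi by (intro integral_mono_AE pw) auto
  also have "\<dots> = ln A"
    using If Gi intf A0 by (simp add: AG[symmetric])
  finally have "(\<integral>\<omega>. ln (g (X \<omega>)) \<partial>M) + diff_entropy f \<le> ln A"
    using I1 fH unfolding E1 diff_entropy_def by simp
  then have "exp ((\<integral>\<omega>. ln (g (X \<omega>)) \<partial>M) + diff_entropy f) \<le> exp (ln A)" by simp
  then show ?thesis using A0 by (simp add: exp_add A_def)
qed



lemma jcdf_int:
  assumes "prob_space M" and [measurable]: "U \<in> borel_measurable M" "V \<in> borel_measurable M"
  shows "jointCDF M U V a b = (\<integral>\<omega>. (if U \<omega> \<le> a \<and> V \<omega> \<le> b then 1 else 0::real) \<partial>M)"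
proof -
  interpret prob_space M by fact
  have "jointCDF M U V a b = integral\<^sup>L M (indicator {\<omega>\<in>space M. U \<omega> \<le> a \<and> V \<omega> \<le> b})"
    unfolding jointCDF_def by (simp add: Int_absorb2 subset_iff)
  also have "\<dots> = (\<integral>\<omega>. (if U \<omega> \<le> a \<and> V \<omega> \<le> b then 1 else 0::real) \<partial>M)"
    by (rule Bochner_Integration.integral_cong) (auto simp: indicator_def)
  finally show ?thesis .
qed

lemma jcdf_measurable:
  assumes "prob_space M" and [measurable]: "U \<in> borel_measurable M" "V \<in> borel_measurable M"
    and [measurable]: "f \<in> borel_measurable N" "g \<in> borel_measurable N"
  shows "(\<lambda>z. jointCDF M U V (f z) (g z)) \<in> borel_measurable N"
proof -
  interpret prob_space M by fact
  show ?thesis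
    unfolding jcdf_int[OF assms(1-3)] by measurable
qed

lemma jcdf_nonneg: "jointCDF M U V a b \<ge> 0"
  unfolding jointCDF_def by simp

lemma jcdf_le1: "prob_space M \<Longrightarrow> jointCDF M U V a b \<le> 1"
  unfolding jointCDF_def by (simp add: prob_space.prob_le_1)

lemma jcdf_swap: "jointCDF M V U b a = jointCDF M U V a b"
  unfolding jointCDF_def by (simp add: conj_commute)

lemma jcdf_mono:
  assumes "prob_space M" and [measurable]: "U \<in> borel_measurable M" "V \<in> borel_measurable M"
    and "a \<le> a'" "b \<le> b'"
  shows "jointCDF M U V a b \<le> jointCDF M U V a' b'"
proof -
  interpret prob_space M by fact
  show ?thesis unfolding jointCDF_def
    by (rule finite_measure_mono) (use assms(4,5) in auto)
qed

lemma Hbound: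
  fixes t :: real assumes "0 \<le> t" "t \<le> 1"
  shows "0 \<le> t * \<bar>ln t\<bar>" "t * \<bar>ln t\<bar> \<le> 1"
proof -
  show "0 \<le> t * \<bar>ln t\<bar>" using assms by simp
  show "t * \<bar>ln t\<bar> \<le> 1"
  proof (cases "t = 0")
    case False
    then have tp: "t > 0" using assms by simp
    have "ln (1/t) \<le> 1/t - 1" using tp by (intro ln_le_minus_one) auto
    then have "- ln t \<le> 1/t - 1" using tp by (simp add: ln_div)
    moreover have "ln t \<le> 0" using assms tp by simp
    ultimately have "t * \<bar>ln t\<bar> \<le> t * (1/t - 1)" using tp by (intro mult_left_mono) auto
    also have "\<dots> \<le> 1" using tp assms by (simp add: field_simps)
    finally show ?thesis .
  qed simp
qed

lemma Fub:
  fixes k :: "real \<Rightarrow> real \<Rightarrow> real"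
  assumes km[measurable]: "(\<lambda>z. k (fst z) (snd z)) \<in> borel_measurable (lborel \<Otimes>\<^sub>M lborel)"
    and kb: "\<And>x y. \<bar>k x y\<bar> \<le> 1"
  shows "(\<integral>x\<in>{0..b}. (\<integral>y\<in>{0..c}. k x y \<partial>lborel) \<partial>lborel)
       = (\<integral>y\<in>{0..c}. (\<integral>x\<in>{0..b}. k x y \<partial>lborel) \<partial>lborel)"
proof -
  define K where "K x y = indicator {0..b} x * indicator {0..c} y * k x y" for x y :: real
  have Km[measurable]: "(\<lambda>z. K (fst z) (snd z)) \<in> borel_measurable (lborel \<Otimes>\<^sub>M lborel)"
    unfolding K_def by measurable
  have "integrable (lborel \<Otimes>\<^sub>M lborel) (\<lambda>z. K (fst z) (snd z))"
  proof (rule integrableI_bounded_set[where A="{0..b} \<times> {0..c}" and B=1])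
    show "{0..b} \<times> {0..c} \<in> sets (lborel \<Otimes>\<^sub>M lborel)" by simp
    show "emeasure (lborel \<Otimes>\<^sub>M lborel) ({0..b} \<times> {0..c}) < \<infinity>"
      by (simp add: lborel.emeasure_pair_measure_Times ennreal_mult_less_top emeasure_lborel_Icc_eq)
    show "AE x in lborel \<Otimes>\<^sub>M lborel. x \<in> {0..b} \<times> {0..c} \<longrightarrow> norm (K (fst x) (snd x)) \<le> 1"
      using kb by (auto simp: K_def indicator_def)
    show "AE x in lborel \<Otimes>\<^sub>M lborel. x \<notin> {0..b} \<times> {0..c} \<longrightarrow> K (fst x) (snd x) = 0"
      by (auto simp: K_def indicator_def mem_Times_iff)
  qed simp
  then have "integrable (lborel \<Otimes>\<^sub>M lborel) (case_prod K)" by (simp add: case_prod_beta')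
  from lborel_pair.Fubini_integral[OF this]
  have F: "(\<integral>y. (\<integral>x. K x y \<partial>lborel) \<partial>lborel) = (\<integral>x. (\<integral>y. K x y \<partial>lborel) \<partial>lborel)" .
  have L: "(\<integral>x\<in>{0..b}. (\<integral>y\<in>{0..c}. k x y \<partial>lborel) \<partial>lborel) = (\<integral>x. (\<integral>y. K x y \<partial>lborel) \<partial>lborel)"
    unfolding set_lebesgue_integral_def K_def
    by (simp add: integral_mult_right_zero[symmetric] mult.assoc del: integral_mult_right_zero)
  have R: "(\<integral>y\<in>{0..c}. (\<integral>x\<in>{0..b}. k x y \<partial>lborel) \<partial>lborel) = (\<integral>y. (\<integral>x. K x y \<partial>lborel) \<partial>lborel)"
    unfolding set_lebesgue_integral_def K_def
    by (simp add: integral_mult_right_zero[symmetric] mult.assoc mult.left_commute del: integral_mult_right_zero)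
  show ?thesis using F L R by simp
qed

lemma sec_props:
  assumes P: "prob_space M" and Um[measurable]: "U \<in> borel_measurable M" and Vm[measurable]: "V \<in> borel_measurable M"
    and c0: "0 \<le> c"
  shows "(\<lambda>x. \<integral>y\<in>{0..c}. jointCDF M U V x y * \<bar>ln (jointCDF M U V x y)\<bar> \<partial>lborel) \<in> borel_measurable lborel"
    and "set_integrable lborel {0..c} (\<lambda>y. jointCDF M U V x y * \<bar>ln (jointCDF M U V x y)\<bar>)"
    and "0 \<le> (\<integral>y\<in>{0..c}. jointCDF M U V x y * \<bar>ln (jointCDF M U V x y)\<bar> \<partial>lborel)"
    and "set_integrable lborel {0..b} (\<lambda>x. \<integral>y\<in>{0..c}. jointCDF M U V x y * \<bar>ln (jointCDF M U V x y)\<bar> \<partial>lborel)"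
proof -
  note jm[measurable (raw)] = jcdf_measurable[OF P Um Vm]
  define h where "h x y = jointCDF M U V x y * \<bar>ln (jointCDF M U V x y)\<bar>" for x y
  have hb: "0 \<le> h x y" "h x y \<le> 1" for x y
    unfolding h_def using Hbound[OF jcdf_nonneg jcdf_le1[OF P]] by auto
  have hm: "case_prod (\<lambda>x y. indicator {0..c} y *\<^sub>R h x y) \<in> borel_measurable (lborel \<Otimes>\<^sub>M lborel)"
    unfolding h_def case_prod_beta by measurable
  show gm: "(\<lambda>x. \<integral>y\<in>{0..c}. jointCDF M U V x y * \<bar>ln (jointCDF M U V x y)\<bar> \<partial>lborel) \<in> borel_measurable lborel"
    unfolding set_lebesgue_integral_def using lborel.borel_measurable_lebesgue_integral[OF hm]
    by (simp add: h_def)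
  have si: "set_integrable lborel {0..c} (h x)" for x
    unfolding set_integrable_def
    by (rule integrableI_bounded_set_indicator[where B=1])
       (use hb in \<open>auto simp: h_def emeasure_lborel_Icc_eq\<close>)
  then show "set_integrable lborel {0..c} (\<lambda>y. jointCDF M U V x y * \<bar>ln (jointCDF M U V x y)\<bar>)"
    by (simp add: h_def[abs_def])
  have nn: "0 \<le> (\<integral>y\<in>{0..c}. h x y \<partial>lborel)" for x
    using hb unfolding set_lebesgue_integral_def by (intro integral_nonneg_AE) (auto simp: indicator_def)
  then show "0 \<le> (\<integral>y\<in>{0..c}. jointCDF M U V x y * \<bar>ln (jointCDF M U V x y)\<bar> \<partial>lborel)"
    by (simp add: h_def)
  have le: "(\<integral>y\<in>{0..c}. h x y \<partial>lborel) \<le> c" for x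
  proof -
    have "(\<integral>y\<in>{0..c}. h x y \<partial>lborel) \<le> (\<integral>y\<in>{0..c}. 1 \<partial>lborel)"
      using si hb by (intro set_integral_mono) (auto simp: set_integrable_def
          intro!: integrableI_bounded_set_indicator[where B=1] simp: emeasure_lborel_Icc_eq)
    also have "\<dots> = c" using c0 by (simp add: set_lebesgue_integral_def)
    finally show ?thesis .
  qed
  show "set_integrable lborel {0..b} (\<lambda>x. \<integral>y\<in>{0..c}. jointCDF M U V x y * \<bar>ln (jointCDF M U V x y)\<bar> \<partial>lborel)"
    unfolding set_integrable_def
    by (rule integrableI_bounded_set_indicator[where B=c])
       (use gm nn le in \<open>auto simp: h_def emeasure_lborel_Icc_eq\<close>)
qed

lemma no_atoms:
  fixes U :: "'a \<Rightarrow> real"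
  assumes D: "distributed M lborel U (\<lambda>x. ennreal (f x))"
  shows "AE \<omega> in M. U \<omega> \<noteq> t"
proof -
  have Um: "U \<in> measurable M lborel" using D by (simp add: distributed_def)
  have fm: "(\<lambda>x. ennreal (f x)) \<in> borel_measurable lborel" using D by (simp add: distributed_def)
  have "AE x in density lborel (\<lambda>x. ennreal (f x)). x \<noteq> t"
    using AE_lborel_singleton[of t] by (subst AE_density[OF fm]) (auto elim: AE_mp)
  then have "AE x in distr M lborel U. x \<noteq> t"
    using distributed_distr_eq_density[OF D] by metis
  then show ?thesis using Um by (subst (asm) AE_distr_iff) auto
qed

lemma subsing: "(\<And>x y. x \<in> T \<Longrightarrow> y \<in> T \<Longrightarrow> x = y) \<Longrightarrow> \<exists>t. T \<subseteq> {t}"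
  by blast

lemma cdf_pos_AE:
  fixes U V :: "'a \<Rightarrow> real"
  assumes P: "prob_space M" and Um[measurable]: "U \<in> borel_measurable M" and Vm[measurable]: "V \<in> borel_measurable M"
    and D: "distributed M lborel U (\<lambda>x. ennreal (f x))"
    and Vc: "AE \<omega> in M. V \<omega> < c"
  shows "AE \<omega> in M. 0 < jointCDF M U V (U \<omega>) c \<and> jointCDF M U V (U \<omega>) c < 1"
proof -
  interpret prob_space M by fact
  define p where "p x = jointCDF M U V x c" for x
  have p01: "0 \<le> p x" "p x \<le> 1" for x unfolding p_def using jcdf_nonneg jcdf_le1[OF P] by auto
  have pmono: "x \<le> y \<Longrightarrow> p x \<le> p y" for x y unfolding p_def by (rule jcdf_mono[OF P Um Vm]) auto
  have pdef: "p x = \<P>(\<omega> in M. U \<omega> \<le> x \<and> V \<omega> \<le> c)" for x unfolding p_def jointCDF_def ..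
  define Q0 where "Q0 = {q\<in>\<rat>. p q = 0}"
  define Q1 where "Q1 = {q\<in>\<rat>. p q = 1}"
  have cQ0: "countable Q0" "countable Q1" unfolding Q0_def Q1_def
    by (auto intro: countable_subset[OF _ countable_rat])
  have A0: "AE \<omega> in M. \<forall>q\<in>Q0. \<not> (U \<omega> \<le> q \<and> V \<omega> \<le> c)"
  proof (subst AE_ball_countable[OF cQ0(1)], intro ballI)
    fix q assume "q \<in> Q0"
    then have "\<P>(\<omega> in M. U \<omega> \<le> q \<and> V \<omega> \<le> c) = 0" unfolding Q0_def pdef by simp
    then show "AE \<omega> in M. \<not> (U \<omega> \<le> q \<and> V \<omega> \<le> c)" by (subst (asm) prob_Collect_eq_0) auto
  qed
  have A1: "AE \<omega> in M. \<forall>q\<in>Q1. U \<omega> \<le> q \<and> V \<omega> \<le> c"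
  proof (subst AE_ball_countable[OF cQ0(2)], intro ballI)
    fix q assume "q \<in> Q1"
    then have "\<P>(\<omega> in M. U \<omega> \<le> q \<and> V \<omega> \<le> c) = 1" unfolding Q1_def pdef by simp
    then show "AE \<omega> in M. U \<omega> \<le> q \<and> V \<omega> \<le> c" by (subst (asm) prob_Collect_eq_1) auto
  qed
  define T0 where "T0 = {x. p x = 0 \<and> (\<forall>q\<in>\<rat>. x < q \<longrightarrow> p q \<noteq> 0)}"
  define T1 where "T1 = {x. p x = 1 \<and> (\<forall>q\<in>\<rat>. q < x \<longrightarrow> p q \<noteq> 1)}"
  have "\<exists>t. T0 \<subseteq> {t}"
  proof (rule subsing)
    fix x y assume x: "x \<in> T0" and y: "y \<in> T0"
    show "x = y"
    proof (rule ccontr)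
      assume "x \<noteq> y"
      then consider "x < y" | "y < x" by linarith
      then show False
      proof cases
        case 1
        then obtain q where q: "q \<in> \<rat>" "x < q" "q < y" using Rats_dense_in_real by blast
        then have "p q \<le> p y" by (intro pmono) auto
        then have "p q = 0" using y p01[of q] by (auto simp: T0_def)
        then show False using x q by (auto simp: T0_def)
      next
        case 2
        then obtain q where q: "q \<in> \<rat>" "y < q" "q < x" using Rats_dense_in_real by blast
        then have "p q \<le> p x" by (intro pmono) auto
        then have "p q = 0" using x p01[of q] by (auto simp: T0_def)
        then show False using y q by (auto simp: T0_def)
      qed
    qed
  qed
  then obtain t0 where t0: "T0 \<subseteq> {t0}" by blast
  have "\<exists>t. T1 \<subseteq> {t}"
  proof (rule subsing)
    fix x y assume x: "x \<in> T1" and y: "y \<in> T1"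
    show "x = y"
    proof (rule ccontr)
      assume "x \<noteq> y"
      then consider "x < y" | "y < x" by linarith
      then show False
      proof cases
        case 1
        then obtain q where q: "q \<in> \<rat>" "x < q" "q < y" using Rats_dense_in_real by blast
        then have "p x \<le> p q" by (intro pmono) auto
        then have "p q = 1" using x p01[of q] by (auto simp: T1_def)
        then show False using y q by (auto simp: T1_def)
      next
        case 2
        then obtain q where q: "q \<in> \<rat>" "y < q" "q < x" using Rats_dense_in_real by blast
        then have "p y \<le> p q" by (intro pmono) auto
        then have "p q = 1" using y p01[of q] by (auto simp: T1_def)
        then show False using x q by (auto simp: T1_def)
      qed
    qed
  qed
  then obtain t1 where t1: "T1 \<subseteq> {t1}" by blast
  have "AE \<omega> in M. U \<omega> \<noteq> t0" "AE \<omega> in M. U \<omega> \<noteq> t1" using no_atoms[OF D] by auto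
  with A0 A1 Vc show ?thesis
  proof eventually_elim
    case (elim \<omega>)
    have "p (U \<omega>) \<noteq> 0"
    proof
      assume z: "p (U \<omega>) = 0"
      show False
      proof (cases "\<exists>q\<in>\<rat>. U \<omega> < q \<and> p q = 0")
        case True
        then obtain q where "q \<in> \<rat>" "U \<omega> < q" "p q = 0" by blast
        then have "q \<in> Q0" unfolding Q0_def by auto
        with elim \<open>U \<omega> < q\<close> show False by auto
      next
        case False
        then have "U \<omega> \<in> T0" using z unfolding T0_def by auto
        with t0 elim show False by auto
      qed
    qed
    moreover have "p (U \<omega>) \<noteq> 1"
    proof
      assume z: "p (U \<omega>) = 1"
      show False
      proof (cases "\<exists>q\<in>\<rat>. q < U \<omega> \<and> p q = 1")
        case True
        then obtain q where "q \<in> \<rat>" "q < U \<omega>" "p q = 1" by blast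
        then have "q \<in> Q1" unfolding Q1_def by auto
        with elim \<open>q < U \<omega>\<close> show False by fastforce
      next
        case False
        then have "U \<omega> \<in> T1" using z unfolding T1_def by auto
        with t1 elim show False by auto
      qed
    qed
    ultimately show ?case using p01[of "U \<omega>"] unfolding p_def by auto
  qed
qed

lemma sec_pos:
  fixes U V :: "'a \<Rightarrow> real"
  assumes P: "prob_space M" and Um[measurable]: "U \<in> borel_measurable M" and Vm[measurable]: "V \<in> borel_measurable M"
    and Vc: "AE \<omega> in M. V \<omega> < c" and c0: "0 < c"
    and px: "0 < jointCDF M U V x c" "jointCDF M U V x c < 1"
  shows "0 < (\<integral>y\<in>{0..c}. jointCDF M U V x y * \<bar>ln (jointCDF M U V x y)\<bar> \<partial>lborel)"
proof -
  interpret prob_space M by fact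
  define F where "F y = jointCDF M U V x y" for y
  have Fdef: "F y = \<P>(\<omega> in M. U \<omega> \<le> x \<and> V \<omega> \<le> y)" for y unfolding F_def jointCDF_def ..
  have Fmono: "y \<le> y' \<Longrightarrow> F y \<le> F y'" for y y' unfolding F_def by (rule jcdf_mono[OF P Um Vm]) auto
  have "\<exists>d<c. 0 < F d"
  proof (rule ccontr)
    assume "\<not> (\<exists>d<c. 0 < F d)"
    then have z: "F d = 0" if "d < c" for d using that jcdf_nonneg[of M U V x d] by (force simp: F_def)
    have "AE \<omega> in M. \<forall>n::nat. \<not> (U \<omega> \<le> x \<and> V \<omega> \<le> c - 1 / Suc n)"
    proof (subst AE_all_countable, intro allI)
      fix n :: nat
      have "F (c - 1 / Suc n) = 0" by (rule z) auto
      then show "AE \<omega> in M. \<not> (U \<omega> \<le> x \<and> V \<omega> \<le> c - 1 / Suc n)"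
        unfolding Fdef by (subst (asm) prob_Collect_eq_0) auto
    qed
    with Vc have "AE \<omega> in M. \<not> (U \<omega> \<le> x \<and> V \<omega> \<le> c)"
    proof eventually_elim
      case (elim \<omega>)
      show ?case
      proof
        assume a: "U \<omega> \<le> x \<and> V \<omega> \<le> c"
        obtain n :: nat where n: "1 / Suc n < c - V \<omega>"
          using elim(1) reals_Archimedean[of "c - V \<omega>"] by (auto simp: inverse_eq_divide)
        with elim(2)[rule_format, of n] a show False by auto
      qed
    qed
    then have "F c = 0" unfolding Fdef by (subst prob_Collect_eq_0) auto
    with px show False by (simp add: F_def)
  qed
  then obtain d where d: "d < c" "0 < F d" by blast
  define d' where "d' = max d 0"
  have d': "0 \<le> d'" "d' < c" "d \<le> d'" using d c0 by (auto simp: d'_def)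
  define \<delta> where "\<delta> = F d'"
  have \<delta>: "0 < \<delta>" using Fmono[OF d'(3)] d by (simp add: \<delta>_def)
  define \<kappa> where "\<kappa> = \<delta> * (- ln (F c))"
  have \<kappa>: "0 < \<kappa>" using \<delta> px by (simp add: \<kappa>_def F_def mult_pos_neg)
  have pw: "indicator {d'..c} y * \<kappa> \<le> indicator {0..c} y * (F y * \<bar>ln (F y)\<bar>)" for y
  proof (cases "y \<in> {d'..c}")
    case True
    then have "\<delta> \<le> F y" "F y \<le> F c" using Fmono by (auto simp: \<delta>_def)
    then have Fy: "0 < F y" "F y < 1" using \<delta> px by (auto simp: F_def)
    have "ln (F y) \<le> ln (F c)" using \<open>F y \<le> F c\<close> Fy by simp
    then have "- ln (F c) \<le> \<bar>ln (F y)\<bar>" by linarith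
    moreover have "0 \<le> - ln (F c)" using px by (simp add: F_def)
    ultimately have "\<delta> * (- ln (F c)) \<le> F y * \<bar>ln (F y)\<bar>"
      using \<open>\<delta> \<le> F y\<close> \<delta> by (intro mult_mono) auto
    then show ?thesis using True d' by (simp add: \<kappa>_def indicator_def)
  next
    case False
    then show ?thesis using jcdf_nonneg[of M U V x y] by (simp add: indicator_def F_def)
  qed
  have "0 < \<kappa> * (c - d')" using \<kappa> d' by simp
  also have "\<kappa> * (c - d') = (\<integral>y. indicator {d'..c} y * \<kappa> \<partial>lborel)"
    using d' by simp
  also have "\<dots> \<le> (\<integral>y. indicator {0..c} y * (F y * \<bar>ln (F y)\<bar>) \<partial>lborel)"
  proof (rule integral_mono[OF _ _ pw])
    show "integrable lborel (\<lambda>y. indicator {d'..c} y * \<kappa>)"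
      using integrableI_bounded_set_indicator[of "{d'..c}" lborel "\<lambda>_. \<kappa>" \<kappa>]
      by (simp add: emeasure_lborel_Icc_eq mult.commute)
    show "integrable lborel (\<lambda>y. indicator {0..c} y * (F y * \<bar>ln (F y)\<bar>))"
      using sec_props(2)[OF P Um Vm, of c x] c0 unfolding set_integrable_def F_def by simp
  qed
  finally show ?thesis unfolding set_lebesgue_integral_def F_def by simp
qed



theorem mainTheorem3:
  fixes M :: "'a measure" and X1 X2 :: "'a \<Rightarrow> real"
    and fj :: "real \<times> real \<Rightarrow> real" and f1 f2 :: "real \<Rightarrow> real" and b1 b2 :: real
  assumes "prob_space M"
    and "b1 > 0" and "b2 > 0"
    and "\<And>x. fj x \<ge> 0" and "\<And>x. f1 x \<ge> 0" and "\<And>x. f2 x \<ge> 0"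
    and joint: "distributed M lborel (\<lambda>\<omega>. (X1 \<omega>, X2 \<omega>)) (\<lambda>x. ennreal (fj x))"
    and marg1: "distributed M lborel X1 (\<lambda>x. ennreal (f1 x))"
    and marg2: "distributed M lborel X2 (\<lambda>x. ennreal (f2 x))"
    and supp: "AE \<omega> in M. 0 < X1 \<omega> \<and> X1 \<omega> < b1 \<and> 0 < X2 \<omega> \<and> X2 \<omega> < b2"
    and fin_H1: "integrable lborel (\<lambda>x. f1 x * ln (f1 x))"
    and fin_H2: "integrable lborel (\<lambda>x. f2 x * ln (f2 x))"
    and fin_C1: "integrable M (\<lambda>\<omega>. ln (\<integral>x2\<in>{0..b2}.
        jointCDF M X1 X2 (X1 \<omega>) x2 * \<bar>ln (jointCDF M X1 X2 (X1 \<omega>) x2)\<bar> \<partial>lborel))"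
    and fin_C2: "integrable M (\<lambda>\<omega>. ln (\<integral>x1\<in>{0..b1}.
        jointCDF M X1 X2 x1 (X2 \<omega>) * \<bar>ln (jointCDF M X1 X2 x1 (X2 \<omega>))\<bar> \<partial>lborel))"
  shows "bcpe M X1 X2 b1 b2 \<ge>
    max (exp (\<integral>\<omega>. ln (\<integral>x2\<in>{0..b2}.
              jointCDF M X1 X2 (X1 \<omega>) x2 * \<bar>ln (jointCDF M X1 X2 (X1 \<omega>) x2)\<bar> \<partial>lborel) \<partial>M)
           * exp (diff_entropy f1))
        (exp (\<integral>\<omega>. ln (\<integral>x1\<in>{0..b1}.
              jointCDF M X1 X2 x1 (X2 \<omega>) * \<bar>ln (jointCDF M X1 X2 x1 (X2 \<omega>))\<bar> \<partial>lborel) \<partial>M)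
           * exp (diff_entropy f2))"

proof -
  interpret prob_space M by fact
  note P = \<open>prob_space M\<close>
  have X1m[measurable]: "X1 \<in> borel_measurable M" using marg1 by (simp add: distributed_def)
  have X2m[measurable]: "X2 \<in> borel_measurable M" using marg2 by (simp add: distributed_def)
  have b1: "0 \<le> b1" "0 < b1" and b2: "0 \<le> b2" "0 < b2" using assms(2,3) by auto
  define F where "F = jointCDF M X1 X2"
  define g1 where "g1 x = (\<integral>y\<in>{0..b2}. F x y * \<bar>ln (F x y)\<bar> \<partial>lborel)" for x
  define g2 where "g2 y = (\<integral>x\<in>{0..b1}. jointCDF M X2 X1 y x * \<bar>ln (jointCDF M X2 X1 y x)\<bar> \<partial>lborel)" for y
  have g2': "g2 y = (\<integral>x\<in>{0..b1}. F x y * \<bar>ln (F x y)\<bar> \<partial>lborel)" for y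
    unfolding g2_def F_def jcdf_swap[of M X1 X2] ..
  have neg: "F x y * ln (F x y) = - (F x y * \<bar>ln (F x y)\<bar>)" for x y
  proof -
    have "F x y \<le> 1" unfolding F_def by (rule jcdf_le1[OF P])
    then have "ln (F x y) \<le> 0" using jcdf_nonneg[of M X1 X2 x y] by (cases "F x y = 0") (auto simp: F_def)
    then show ?thesis by simp
  qed
  have inner: "(\<integral>y\<in>{0..b2}. F x y * ln (F x y) \<partial>lborel) = - g1 x" for x
    unfolding g1_def neg set_lebesgue_integral_def by simp
  have bc1: "bcpe M X1 X2 b1 b2 = (\<integral>x\<in>{0..b1}. g1 x \<partial>lborel)"
    unfolding bcpe_def F_def[symmetric] inner by (simp add: set_lebesgue_integral_def)
  have km: "(\<lambda>z. F (fst z) (snd z) * \<bar>ln (F (fst z) (snd z))\<bar>) \<in> borel_measurable (lborel \<Otimes>\<^sub>M lborel)"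
  proof -
    note jm[measurable (raw)] = jcdf_measurable[OF P X1m X2m]
    show ?thesis unfolding F_def by measurable
  qed
  have kb: "\<bar>F x y * \<bar>ln (F x y)\<bar>\<bar> \<le> 1" for x y
    using Hbound[OF jcdf_nonneg jcdf_le1[OF P], of X1 X2 x y] by (simp add: F_def)
  have bc2: "bcpe M X1 X2 b1 b2 = (\<integral>y\<in>{0..b2}. g2 y \<partial>lborel)"
    unfolding bc1 g1_def g2' using Fub[of "\<lambda>x y. F x y * \<bar>ln (F x y)\<bar>", OF km kb] .
  have Vc2: "AE \<omega> in M. X2 \<omega> < b2" using supp by eventually_elim auto
  have Vc1: "AE \<omega> in M. X1 \<omega> < b1" using supp by eventually_elim auto
  have pos1: "AE \<omega> in M. 0 < X1 \<omega> \<and> X1 \<omega> < b1 \<and> 0 < g1 (X1 \<omega>)"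
    using supp cdf_pos_AE[OF P X1m X2m marg1 Vc2]
  proof eventually_elim
    case (elim \<omega>)
    then show ?case unfolding g1_def F_def using sec_pos[OF P X1m X2m Vc2 b2(2)] by auto
  qed
  have pos2: "AE \<omega> in M. 0 < X2 \<omega> \<and> X2 \<omega> < b2 \<and> 0 < g2 (X2 \<omega>)"
    using supp cdf_pos_AE[OF P X2m X1m marg2 Vc1]
  proof eventually_elim
    case (elim \<omega>)
    then show ?case unfolding g2_def using sec_pos[OF P X2m X1m Vc1 b1(2)] by auto
  qed
  have J1: "exp (\<integral>\<omega>. ln (g1 (X1 \<omega>)) \<partial>M) * exp (diff_entropy f1) \<le> (\<integral>x\<in>{0..b1}. g1 x \<partial>lborel)"
  proof (rule jensen_aux[OF P assms(5) marg1 _ _ _ pos1 fin_H1])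
    show "g1 \<in> borel_measurable lborel" unfolding g1_def[abs_def] F_def by (rule sec_props(1)[OF P X1m X2m b2(1)])
    show "0 \<le> g1 x" for x unfolding g1_def F_def by (rule sec_props(3)[OF P X1m X2m b2(1)])
    show "set_integrable lborel {0..b1} g1" unfolding g1_def[abs_def] F_def by (rule sec_props(4)[OF P X1m X2m b2(1)])
    show "integrable M (\<lambda>\<omega>. ln (g1 (X1 \<omega>)))" using fin_C1 unfolding g1_def F_def .
  qed
  have J2: "exp (\<integral>\<omega>. ln (g2 (X2 \<omega>)) \<partial>M) * exp (diff_entropy f2) \<le> (\<integral>y\<in>{0..b2}. g2 y \<partial>lborel)"
  proof (rule jensen_aux[OF P assms(6) marg2 _ _ _ pos2 fin_H2])
    show "g2 \<in> borel_measurable lborel" unfolding g2_def[abs_def] by (rule sec_props(1)[OF P X2m X1m b1(1)])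
    show "0 \<le> g2 x" for x unfolding g2_def by (rule sec_props(3)[OF P X2m X1m b1(1)])
    show "set_integrable lborel {0..b2} g2" unfolding g2_def[abs_def] by (rule sec_props(4)[OF P X2m X1m b1(1)])
    show "integrable M (\<lambda>\<omega>. ln (g2 (X2 \<omega>)))" using fin_C2 unfolding g2' F_def .
  qed
  have e1: "(\<integral>\<omega>. ln (g1 (X1 \<omega>)) \<partial>M) = (\<integral>\<omega>. ln (\<integral>x2\<in>{0..b2}.
        jointCDF M X1 X2 (X1 \<omega>) x2 * \<bar>ln (jointCDF M X1 X2 (X1 \<omega>) x2)\<bar> \<partial>lborel) \<partial>M)"
    unfolding g1_def F_def ..
  have e2: "(\<integral>\<omega>. ln (g2 (X2 \<omega>)) \<partial>M) = (\<integral>\<omega>. ln (\<integral>x1\<in>{0..b1}.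
        jointCDF M X1 X2 x1 (X2 \<omega>) * \<bar>ln (jointCDF M X1 X2 x1 (X2 \<omega>))\<bar> \<partial>lborel) \<partial>M)"
    unfolding g2' F_def ..
  show ?thesis using J1 J2 bc1 bc2 unfolding e1 e2 by simp
qed

end
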